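(* Let $x_0,\dots,x_T$ be generated by $x_0=0_n$, $x_{t+1}=\bar A f(x_t)+\bar d_t$ for $t=0,\dots,T-1$. Then $\bar A$ is a global minimizer of $$\min_{A\in\mathbb{R}^{n\times m}} \sum_{t=0}^{T-1}\|(\bar A - A) f(x_t)+\bar d_t\|_2$$ if and only if $$\sum_{t\in\mathcal K}\hat d_t^\top Z^\top f(x_t)\le \sum_{t\in\mathcal K^c}\|Z^\top f(x_t)\|_2\qquad\text{for all } Z\in\mathbb{R}^{m\times n}.$$
   Context: $f:\mathbb{R}^n\to\mathbb{R}^m$ is a given (basis) function, $\bar A\in\mathbb{R}^{n\times m}$ is the ground-truth matrix, and $\bar d_0,\dots,\bar d_{T-1}\in\mathbb{R}^n$ are attack vectors. The attack set is $\mathcal K:=\{t\in\{0,\dots,T-1\}:\bar d_t\neq 0\}$, $\mathcal K^c:=\{0,\dots,T-1\}\setminus\mathcal K$, and $\hat d_t:=\bar d_t/\|\bar d_t\|_2$ for $t\in\mathcal K$. Note the objective equals $\sum_{t=0}^{T-1}\|x_{t+1}-Af(x_t)\|_2$. *)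

theory Defs
  imports "HOL-Analysis.Analysis"
begin

fun traj :: "real^'m^'n \<Rightarrow> (real^'n \<Rightarrow> real^'m) \<Rightarrow> (nat \<Rightarrow> real^'n) \<Rightarrow> nat \<Rightarrow> real^'n" where
  "traj Abar f d 0 = 0"
| "traj Abar f d (Suc t) = Abar *v f (traj Abar f d t) + d t"

definition objective :: "real^'m^'n \<Rightarrow> (real^'n \<Rightarrow> real^'m) \<Rightarrow> (nat \<Rightarrow> real^'n) \<Rightarrow> nat \<Rightarrow> real^'m^'n \<Rightarrow> real" where
  "objective Abar f d T A = (\<Sum>t<T. norm ((Abar - A) *v f (traj Abar f d t) + d t))"

definition attack_set :: "(nat \<Rightarrow> real^'n) \<Rightarrow> nat \<Rightarrow> nat set" where
  "attack_set d T = {t. t < T \<and> d t \<noteq> 0}"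

end

theory Submission
  imports Defs
begin

lemma dnorm: fixes d w :: "'a::real_inner" assumes "d \<noteq> 0"
  shows "((\<lambda>s. norm (d - s *\<^sub>R w)) has_real_derivative (- (sgn d \<bullet> w))) (at 0)"
proof -
  have "((\<lambda>s. d - s *\<^sub>R w) has_derivative (\<lambda>h. - (h *\<^sub>R w))) (at 0)"
    by (auto intro!: derivative_eq_intros)
  from has_derivative_compose[OF this has_derivative_norm[of "d - 0 *\<^sub>R w"]] assms
  have "((\<lambda>s. norm (d - s *\<^sub>R w)) has_derivative (\<lambda>h. - (h * (w \<bullet> sgn d)))) (at 0)" by simp
  then show ?thesis unfolding has_field_derivative_def
    by (subst inner_commute) (erule has_derivative_eq_rhs, simp add: fun_eq_iff)
qed

lemma lowb: fixes d v :: "'a::real_inner" assumes "d \<noteq> 0"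
  shows "norm d + (d /\<^sub>R norm d) \<bullet> v \<le> norm (v + d)"
proof -
  have "(d /\<^sub>R norm d) \<bullet> (v + d) \<le> norm (d /\<^sub>R norm d) * norm (v + d)"
    by (rule norm_cauchy_schwarz)
  also have "norm (d /\<^sub>R norm d) = 1" using assms by simp
  finally have "(d /\<^sub>R norm d) \<bullet> v + (d /\<^sub>R norm d) \<bullet> d \<le> norm (v + d)"
    by (simp add: inner_add_right)
  moreover have "(d /\<^sub>R norm d) \<bullet> d = norm d" using assms
    by (simp add: power2_norm_eq_inner[symmetric] power2_eq_square)
  ultimately show ?thesis by simp
qed

lemma neg_mv: "(- M) *v v = - (M *v (v::real^'m) :: real^'n)"
  by (simp add: matrix_vector_mult_def vec_eq_iff sum_negf)

theorem theorem1:
  fixes Abar :: "real^'m^'n" and f :: "real^'n \<Rightarrow> real^'m"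
    and d :: "nat \<Rightarrow> real^'n" and T :: nat
  shows "(\<forall>A :: real^'m^'n. objective Abar f d T Abar \<le> objective Abar f d T A)
     \<longleftrightarrow>
     (\<forall>Z :: real^'n^'m.
        (\<Sum>t\<in>attack_set d T. (d t /\<^sub>R norm (d t)) \<bullet> (transpose Z *v f (traj Abar f d t)))
        \<le> (\<Sum>t\<in>{..<T} - attack_set d T. norm (transpose Z *v f (traj Abar f d t))))"
proof -
  define y where "y t = f (traj Abar f d t)" for t
  define K where "K = attack_set d T"
  have KT: "K \<subseteq> {..<T}" unfolding K_def attack_set_def by auto
  have fin: "finite K" using KT finite_subset by blast
  have Kc0: "t \<in> {..<T} - K \<Longrightarrow> d t = 0" for t unfolding K_def attack_set_def by auto
  have K0: "t \<in> K \<Longrightarrow> d t \<noteq> 0" for t unfolding K_def attack_set_def by auto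
  have split: "(\<Sum>t<T. g t) = (\<Sum>t\<in>K. g t) + (\<Sum>t\<in>{..<T} - K. g t)" for g :: "nat \<Rightarrow> real"
    by (metis KT finite_lessThan sum.subset_diff add.commute)
  have obj: "objective Abar f d T A = (\<Sum>t\<in>K. norm ((Abar - A) *v y t + d t))
      + (\<Sum>t\<in>{..<T} - K. norm ((Abar - A) *v y t))" for A
    unfolding objective_def y_def[symmetric] split by (simp add: Kc0)
  have obj0: "objective Abar f d T Abar = (\<Sum>t\<in>K. norm (d t))" by (simp add: obj)
  show ?thesis unfolding K_def[symmetric] y_def[symmetric]
  proof
    assume H: "\<forall>A. objective Abar f d T Abar \<le> objective Abar f d T A"
    show "\<forall>Z :: real^'n^'m. (\<Sum>t\<in>K. (d t /\<^sub>R norm (d t)) \<bullet> (transpose Z *v y t))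
        \<le> (\<Sum>t\<in>{..<T} - K. norm (transpose Z *v y t))"
    proof (intro allI)
      fix Z :: "real^'n^'m"
      let ?W = "transpose Z"
      show "(\<Sum>t\<in>K. (d t /\<^sub>R norm (d t)) \<bullet> (?W *v y t))
        \<le> (\<Sum>t\<in>{..<T} - K. norm (?W *v y t))"
      proof (rule ccontr)
      define D where "D = (\<Sum>t\<in>K. - (sgn (d t) \<bullet> (?W *v y t))) + (\<Sum>t\<in>{..<T} - K. norm (?W *v y t))"
      assume "\<not> (\<Sum>t\<in>K. (d t /\<^sub>R norm (d t)) \<bullet> (?W *v y t))
        \<le> (\<Sum>t\<in>{..<T} - K. norm (?W *v y t))"
      hence Dneg: "D < 0" unfolding D_def by (simp add: sum_negf sgn_div_norm)
      define g where "g s = (\<Sum>t\<in>K. norm (d t - s *\<^sub>R (?W *v y t))) + s * (\<Sum>t\<in>{..<T} - K. norm (?W *v y t))" for s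
      have cm: "((\<lambda>s. s * c) has_real_derivative c) (at 0)" for c :: real
        by (auto intro!: derivative_eq_intros)
      have "(g has_real_derivative D) (at 0)" unfolding g_def D_def
        by (intro DERIV_add DERIV_sum dnorm K0 cm)
      from DERIV_neg_dec_right[OF this Dneg] obtain e where e: "e > 0"
        "\<And>h. h > 0 \<Longrightarrow> h < e \<Longrightarrow> g 0 > g (0 + h)" by blast
      have "g 0 > g (e/2)" using e by (metis add_0 half_gt_zero less_add_same_cancel1 field_sum_of_halves)
      moreover have "g s = objective Abar f d T (Abar + s *\<^sub>R ?W)" if "s \<ge> 0" for s
      proof -
        have mv: "(- (s *\<^sub>R M)) *v v = - (s *\<^sub>R (M *v v))" for M :: "real^'m^'n" and v
          by (simp add: matrix_vector_mult_def vec_eq_iff sum_negf scaleR_sum_right sum_distrib_left mult.assoc)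
        show ?thesis unfolding obj g_def using that
          by (simp add: mv sum_distrib_left)
      qed
      moreover have "g 0 = objective Abar f d T Abar" unfolding g_def obj0 by simp
      ultimately show False using H e(1)
        by (metis half_gt_zero less_eq_real_def not_le)
    qed
    qed
  next
    assume H: "\<forall>Z :: real^'n^'m. (\<Sum>t\<in>K. (d t /\<^sub>R norm (d t)) \<bullet> (transpose Z *v y t))
        \<le> (\<Sum>t\<in>{..<T} - K. norm (transpose Z *v y t))"
    show "\<forall>A. objective Abar f d T Abar \<le> objective Abar f d T A"
    proof
      fix A
      let ?B = "Abar - A"
      have c: "(\<Sum>t\<in>K. (d t /\<^sub>R norm (d t)) \<bullet> (- (?B *v y t)))
        \<le> (\<Sum>t\<in>{..<T} - K. norm (- (?B *v y t)))"
        using H[rule_format, of "transpose (- ?B)"]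
        by (simp only: transpose_transpose neg_mv)
      have "(\<Sum>t\<in>K. norm (d t)) \<le> (\<Sum>t\<in>K. norm (d t) + (d t /\<^sub>R norm (d t)) \<bullet> (?B *v y t))
            + (\<Sum>t\<in>{..<T} - K. norm (?B *v y t))"
        using c by (simp add: sum.distrib sum_negf)
      also have "\<dots> \<le> (\<Sum>t\<in>K. norm (?B *v y t + d t)) + (\<Sum>t\<in>{..<T} - K. norm (?B *v y t))"
        by (intro add_right_mono sum_mono lowb K0)
      finally show "objective Abar f d T Abar \<le> objective Abar f d T A" by (simp add: obj obj0)
    qed
  qed
qed

end
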